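(* Let $A=(a_{ij})$ be a nonnegative $n\times n$ matrix. Then $A$ is primitive if and only if $A$ is irreducible and there exists $j\in[n]$ such that $A$ is $j$-primitive.
   Context: $A$ is primitive if $A^k>0$ (entrywise) for some positive integer $k$. $A$ is reducible if there is a nonempty proper subset $I\subset[n]$ with $a_{ij}=0$ for all $i\in I$, $j\notin I$; otherwise irreducible. For $j\in[n]$, $A$ is $j$-primitive if there exists a positive integer $k$ with $(A^k)_{uj}>0$ for all $u\in[n]$. *)

theory Defs
  imports "HOL-Analysis.Analysis"
begin

definition nonneg_mat :: "real^'n^'n \<Rightarrow> bool" where
  "nonneg_mat A \<longleftrightarrow> (\<forall>i j. A $ i $ j \<ge> 0)"

definition mat_pow :: "real^'n^'n \<Rightarrow> nat \<Rightarrow> real^'n^'n" where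
  "mat_pow A k = ((\<lambda>B. B ** A) ^^ k) (mat 1)"

definition primitive :: "real^'n^'n \<Rightarrow> bool" where
  "primitive A \<longleftrightarrow> (\<exists>k>0. \<forall>i j. mat_pow A k $ i $ j > 0)"

definition reducible :: "real^'n^'n \<Rightarrow> bool" where
  "reducible A \<longleftrightarrow> (\<exists>I. I \<noteq> {} \<and> I \<noteq> UNIV \<and> (\<forall>i\<in>I. \<forall>j. j \<notin> I \<longrightarrow> A $ i $ j = 0))"

definition irreducible_mat :: "real^'n^'n \<Rightarrow> bool" where
  "irreducible_mat A \<longleftrightarrow> \<not> reducible A"

definition j_primitive :: "real^'n^'n \<Rightarrow> 'n \<Rightarrow> bool" where
  "j_primitive A j \<longleftrightarrow> (\<exists>k>0. \<forall>u. mat_pow A k $ u $ j > 0)"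

end

theory Submission
  imports Defs
begin

lemma mp_Suc: "mat_pow A (Suc t) = mat_pow A t ** A"
  by (simp add: mat_pow_def)

lemma mp_0: "mat_pow A 0 = mat 1"
  by (simp add: mat_pow_def)

lemma mp_add: "mat_pow A (a + b) = mat_pow A a ** mat_pow A b"
proof (induction b)
  case 0 then show ?case by (simp add: mp_0)
next
  case (Suc b) then show ?case by (simp add: mp_Suc matrix_mul_assoc)
qed

lemma mp_Suc': "mat_pow A (Suc t) = A ** mat_pow A t"
  using mp_add[of A 1 t] by (simp add: mp_Suc mp_0)

lemma prod_nonneg: "nonneg_mat X \<Longrightarrow> nonneg_mat Y \<Longrightarrow> nonneg_mat (X ** Y)"
  unfolding nonneg_mat_def matrix_matrix_mult_def
  by (auto intro!: sum_nonneg)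

lemma mp_nonneg: "nonneg_mat A \<Longrightarrow> nonneg_mat (mat_pow A t)"
proof (induction t)
  case 0 then show ?case by (simp add: mp_0 nonneg_mat_def mat_def)
next
  case (Suc t) then show ?case by (simp add: mp_Suc prod_nonneg)
qed

lemma prod_pos:
  assumes "nonneg_mat X" "nonneg_mat Y" "X$i$k > 0" "Y$k$j > 0"
  shows "(X ** Y)$i$j > 0"
proof -
  have "(X ** Y)$i$j = (\<Sum>m\<in>UNIV. X$i$m * Y$m$j)"
    by (simp add: matrix_matrix_mult_def)
  also have "\<dots> > 0"
    apply (rule sum_pos2[of UNIV k])
    using assms by (auto simp: nonneg_mat_def)
  finally show ?thesis .
qed

lemma prod_pos_ex:
  assumes "(X ** Y)$i$j \<noteq> 0"
  shows "\<exists>m. X$i$m \<noteq> 0"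
proof (rule ccontr)
  assume "\<not> ?thesis"
  then have "(X ** Y)$i$j = 0" by (simp add: matrix_matrix_mult_def)
  with assms show False by simp
qed

lemma block_zero:
  assumes "\<forall>i\<in>I. \<forall>j. j \<notin> I \<longrightarrow> A $ i $ j = 0" "i \<in> I" "j \<notin> I"
  shows "mat_pow A t $ i $ j = 0"
  using assms(2,3)
proof (induction t arbitrary: j)
  case 0 then show ?case by (auto simp: mp_0 mat_def)
next
  case (Suc t)
  have "\<And>m. mat_pow A t $ i $ m * A $ m $ j = 0"
  proof -
    fix m show "mat_pow A t $ i $ m * A $ m $ j = 0"
      using Suc assms(1) by (cases "m \<in> I") auto
  qed
  then have "(\<Sum>m\<in>UNIV. mat_pow A t $ i $ m * A $ m $ j) = 0"
    by (intro sum.neutral) blast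
  then show ?case by (simp add: mp_Suc matrix_matrix_mult_def)
qed

theorem proposition4p4:
  fixes A :: "real^'n^'n"
  assumes "nonneg_mat A"
  shows "primitive A \<longleftrightarrow> (irreducible_mat A \<and> (\<exists>j. j_primitive A j))"
proof
  assume pr: "primitive A"
  then obtain k where k: "k > 0" "\<forall>i j. mat_pow A k $ i $ j > 0"
    unfolding primitive_def by blast
  have "irreducible_mat A"
    unfolding irreducible_mat_def reducible_def
  proof
    assume "\<exists>I. I \<noteq> {} \<and> I \<noteq> UNIV \<and> (\<forall>i\<in>I. \<forall>j. j \<notin> I \<longrightarrow> A $ i $ j = 0)"
    then obtain I i j where "i \<in> I" "j \<notin> I" "\<forall>i\<in>I. \<forall>j. j \<notin> I \<longrightarrow> A $ i $ j = 0"
      by blast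
    then have "mat_pow A k $ i $ j = 0" using block_zero by blast
    with k show False by (metis less_irrefl)
  qed
  moreover have "j_primitive A j" for j
    unfolding j_primitive_def using k by blast
  ultimately show "irreducible_mat A \<and> (\<exists>j. j_primitive A j)" by blast
next
  assume "irreducible_mat A \<and> (\<exists>j. j_primitive A j)"
  then obtain j k where irr: "irreducible_mat A" and k: "k > 0"
    "\<forall>u. mat_pow A k $ u $ j > 0"
    unfolding j_primitive_def by blast
  define P where "P t = {v. \<forall>u. mat_pow A t $ u $ v > 0}" for t
  have nn: "nonneg_mat A" by (rule assms)
  have row: "\<exists>w. A $ u $ w > 0" for u
  proof -
    obtain t where t: "k = Suc t" using k(1) by (cases k) auto
    have "(A ** mat_pow A t) $ u $ j \<noteq> 0" using k(2) t mp_Suc'[of A t] by (metis less_irrefl)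
    then obtain w where "A $ u $ w \<noteq> 0" using prod_pos_ex by blast
    then show ?thesis using nn unfolding nonneg_mat_def by (metis less_eq_real_def)
  qed
  have mono: "P t \<subseteq> P (Suc t)" for t
  proof
    fix v assume v: "v \<in> P t"
    show "v \<in> P (Suc t)" unfolding P_def
    proof (intro CollectI allI)
      fix u
      obtain w where w: "A $ u $ w > 0" using row by blast
      show "mat_pow A (Suc t) $ u $ v > 0"
        unfolding mp_Suc' using prod_pos[OF nn mp_nonneg[OF nn] w] v unfolding P_def by blast
    qed
  qed
  have grow: "v \<in> P t \<Longrightarrow> A $ v $ w > 0 \<Longrightarrow> w \<in> P (Suc t)" for v w t
    unfolding P_def mp_Suc using prod_pos[OF mp_nonneg[OF nn] nn] by blast
  have strict: "P t \<noteq> {} \<Longrightarrow> P t \<noteq> UNIV \<Longrightarrow> P t \<subset> P (Suc t)" for t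
  proof -
    assume a: "P t \<noteq> {}" "P t \<noteq> UNIV"
    then obtain v w where vw: "v \<in> P t" "w \<notin> P t" "A $ v $ w \<noteq> 0"
      using irr unfolding irreducible_mat_def reducible_def by blast
    then have "A $ v $ w > 0" using nn unfolding nonneg_mat_def by (metis less_eq_real_def)
    then have "w \<in> P (Suc t)" using grow vw by blast
    with vw mono show ?thesis by blast
  qed
  have jk: "j \<in> P k" using k unfolding P_def by blast
  have claim: "P (k + m) = UNIV \<or> card (P (k + m)) \<ge> m + 1" for m
  proof (induction m)
    case 0
    have "P k \<noteq> {}" using jk by blast
    then have "card (P k) \<ge> 1" by (simp add: Suc_leI card_gt_0_iff)
    then show ?case by simp
  next
    case (Suc m)
    show ?case
    proof (cases "P (k + m) = UNIV")
      case True
      then have "P (k + Suc m) = UNIV" using mono[of "k+m"] by auto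
      then show ?thesis by blast
    next
      case False
      have ne: "P (k + m) \<noteq> {}"
      proof -
        have "P k \<subseteq> P (k + m)"
          by (induction m) (use mono in \<open>auto simp: subset_iff\<close>)
        then show ?thesis using jk by blast
      qed
      have "P (k+m) \<subset> P (Suc (k+m))" using strict[OF ne False] .
      then have "card (P (k+m)) < card (P (Suc (k+m)))"
        by (simp add: psubset_card_mono)
      then show ?thesis using Suc.IH False by simp
    qed
  qed
  have "P (k + CARD('n)) = UNIV"
  proof -
    have "card (P (k + CARD('n))) \<le> CARD('n)" by (simp add: card_mono)
    then show ?thesis using claim[of "CARD('n)"] by auto
  qed
  then show "primitive A" unfolding primitive_def P_def using k(1)
    by (metis (mono_tags, lifting) UNIV_I add_pos_nonneg mem_Collect_eq zero_le)
qed

end
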